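(* Let $\mathcal{E}=\{e_1,\dots,e_n\}$ be an orthonormal basis for $\mathbb{R}^n$, let $k\le[(n+1)/2]$ and let $u_1\in\mathbb{R}^n$ be a unit vector with $|\mathrm{supp}(u_1)|=k$. Then $u_1$ can be extended to an orthonormal set $\{u_1,\dots,u_k\}$ such that $M=\mathrm{span}\{u_1,\dots,u_k\}$ is a $k$-dimensional maximal $\mathcal{E}$-PR subspace.
   Context: $[a]$ is the integer part of $a$. For $x=\sum_{i=1}^n\alpha_ie_i$, $\mathrm{supp}(x)=\{i:\alpha_i\neq0\}$. A subspace $M$ is an $\mathcal{E}$-PR subspace if $\{P_Me_i\}_{i=1}^n$ (with $P_M$ the orthogonal projection onto $M$) spans $M$ and whenever $x,y\in M$ satisfy $|\langle x,P_Me_i\rangle|=|\langle y,P_Me_i\rangle|$ for all $i$, then $x=\pm y$. It is maximal if it is not a proper subspace of another $\mathcal{E}$-PR subspace. *)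

theory Defs
  imports "HOL-Analysis.Analysis"
begin

definition orth_proj :: "('a::real_inner) set \<Rightarrow> 'a \<Rightarrow> 'a" where
  "orth_proj M x = (THE y. y \<in> M \<and> (\<forall>z\<in>M. orthogonal (x - y) z))"

definition supp :: "('i \<Rightarrow> 'a::real_inner) \<Rightarrow> 'a \<Rightarrow> 'i set" where
  "supp e x = {i. x \<bullet> e i \<noteq> 0}"

definition is_PR :: "('i \<Rightarrow> 'a::real_inner) \<Rightarrow> 'a set \<Rightarrow> bool" where
  "is_PR e M \<longleftrightarrow> subspace M \<and>
     span (range (\<lambda>i. orth_proj M (e i))) = M \<and>
     (\<forall>x\<in>M. \<forall>y\<in>M. (\<forall>i. \<bar>x \<bullet> orth_proj M (e i)\<bar> = \<bar>y \<bullet> orth_proj M (e i)\<bar>)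
        \<longrightarrow> x = y \<or> x = - y)"

definition is_max_PR :: "('i \<Rightarrow> 'a::real_inner) \<Rightarrow> 'a set \<Rightarrow> bool" where
  "is_max_PR e M \<longleftrightarrow> is_PR e M \<and> \<not> (\<exists>M'. is_PR e M' \<and> M \<subset> M')"

end

theory Submission
  imports Defs
begin

definition Fv :: "(nat \<Rightarrow> real) \<Rightarrow> nat \<Rightarrow> real \<Rightarrow> real" where
  "Fv c k t = (\<Sum>j<k. c j * t ^ j)"
definition Fd :: "(nat \<Rightarrow> real) \<Rightarrow> nat \<Rightarrow> real \<Rightarrow> real" where
  "Fd c k t = (\<Sum>j<k. c j * (real j * t ^ (j - 1)))"

lemma Fv_deriv: "(Fv c k has_real_derivative Fd c k t) (at t)"
proof -
  have "((\<lambda>t. \<Sum>j<k. c j * t ^ j) has_real_derivative (\<Sum>j<k. c j * (real j * t ^ (j - 1)))) (at t)"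
    by (rule DERIV_sum, rule DERIV_cmult, simp add: DERIV_pow)
  then show ?thesis unfolding Fv_def Fd_def by (simp add: fun_eq_iff)
qed

lemma rolle_count:
  fixes f f' :: "real \<Rightarrow> real"
  assumes der: "\<And>t. (f has_real_derivative f' t) (at t)"
  shows "finite B \<Longrightarrow> B \<noteq> {} \<Longrightarrow> (\<forall>b\<in>B. f b = 0) \<Longrightarrow>
     \<exists>R. finite R \<and> card B \<le> card R + 1 \<and> R \<subseteq> {Min B<..<Max B} \<and> (\<forall>r\<in>R. f' r = 0)"
proof (induction B rule: finite_linorder_max_induct)
  case empty
  then show ?case by simp
next
  case (insert b B)
  show ?case
  proof (cases "B = {}")
    case True
    then show ?thesis by (intro exI[of _ "{}"]) auto
  next
    case False
    with insert obtain R where R: "finite R" "card B \<le> card R + 1" "R \<subseteq> {Min B<..<Max B}"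
      "\<forall>r\<in>R. f' r = 0" by auto
    have mx: "Max B < b" using insert False by auto
    have "\<exists>z. Max B < z \<and> z < b \<and> DERIV f z :> 0"
    proof (rule Rolle[OF mx])
      show "f (Max B) = f b" using insert False by auto
      show "continuous_on {Max B..b} f"
        by (intro continuous_at_imp_continuous_on ballI DERIV_isCont[OF der])
      show "\<And>x. Max B < x \<Longrightarrow> x < b \<Longrightarrow> f differentiable at x"
        using der real_differentiable_def by blast
    qed
    then obtain z where z: "Max B < z" "z < b" "DERIV f z :> 0" by blast
    have fz: "f' z = 0" using DERIV_unique[OF der z(3)] .
    have zR: "z \<notin> R" using R(3) z(1) by auto
    have mM: "Min B \<le> Max B" using Min_le[OF insert.hyps(1) Max_in[OF insert.hyps(1) False]] .
    have mb: "Min B < b" using mM mx by simp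
    have mn: "Min (insert b B) = Min B"
    proof -
      have "Min (insert b B) = min b (Min B)" using insert.hyps(1) False by (rule Min_insert)
      then show ?thesis using mb by simp
    qed
    have mx2: "Max (insert b B) = b" using insert False
      by (simp add: Max_insert max_absorb2 less_imp_le)
    have "Min B \<le> Max B" using mM .
    have bB: "b \<notin> B" using insert.hyps(2) by auto
    have c1: "card (insert b B) = card B + 1" using insert.hyps(1) bB by simp
    have c2: "card (insert z R) = card R + 1" using R zR by simp
    have "insert z R \<subseteq> {Min B<..<b}" using R(3) z \<open>Min B \<le> Max B\<close> by auto
    show ?thesis
      apply (intro exI[of _ "insert z R"])
      using R c1 c2 fz \<open>insert z R \<subseteq> {Min B<..<b}\<close> mn mx2 by simp
  qed
qed

lemma Fd_roots:
  assumes "\<exists>j\<in>{1..<k}. c j \<noteq> 0"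
  shows "finite {t. Fd c k t = 0} \<and> card {t. Fd c k t = 0} \<le> k - 2"
proof -
  obtain j where j: "1 \<le> j" "j < k" "c j \<noteq> 0" using assms by auto
  have "k = Suc (Suc (k - 2))" using j by linarith
  then obtain p where k: "k = Suc (Suc p)" by blast
  have eq: "Fd c k t = (\<Sum>i\<le>p. (c (Suc i) * real (Suc i)) * t ^ i)" for t
    unfolding Fd_def k
    apply (subst sum.lessThan_Suc_shift)
    apply (simp add: lessThan_Suc_atMost[symmetric] mult.assoc del: sum.lessThan_Suc)
    done
  have nz: "c (Suc (j - 1)) * real (Suc (j - 1)) \<noteq> 0" using j by simp
  have jp: "j - 1 \<le> p" using j k by simp
  have se: "{t. Fd c k t = 0} = {t. (\<Sum>i\<le>p. (c (Suc i) * real (Suc i)) * t ^ i) = 0}"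
    using eq by simp
  have kp: "k - 2 = p" using k by simp
  show ?thesis unfolding se kp
    using polyfun_roots_finite[of "\<lambda>i. c (Suc i) * real (Suc i)", OF nz jp]
      polyfun_roots_card[of "\<lambda>i. c (Suc i) * real (Suc i)", OF nz jp] by simp
qed


lemma coord_zero:
  fixes e :: "'n::finite \<Rightarrow> real^'n"
  assumes eo: "\<And>i j. e i \<bullet> e j = (if i = j then 1 else 0)"
    and eb: "span (range e) = UNIV"
    and x: "\<And>i. x \<bullet> e i = 0"
  shows "x = 0"
proof -
  have "orthogonal x x"
    by (rule orthogonal_to_span[of x "range e"]) (auto simp: eb orthogonal_def x)
  then show ?thesis by (simp add: orthogonal_def)
qed

lemma sum_coord:
  fixes e :: "'n::finite \<Rightarrow> real^'n"
  assumes eo: "\<And>i j. e i \<bullet> e j = (if i = j then 1 else 0)"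
  shows "(\<Sum>l\<in>A. c l *\<^sub>R e l) \<bullet> e i = (if i \<in> A then c i else 0)"
proof -
  have "(\<Sum>l\<in>A. c l *\<^sub>R e l) \<bullet> e i = (\<Sum>l\<in>A. if l = i then c l else 0)"
    unfolding inner_sum_left by (intro sum.cong) (auto simp: eo)
  also have "\<dots> = (if i \<in> A then c i else 0)"
    by (simp add: sum.delta' finite_subset)
  finally show ?thesis .
qed

lemma orth_proj_props:
  fixes M :: "(real^'n) set"
  assumes "subspace M"
  shows "orth_proj M x \<in> M \<and> (\<forall>z\<in>M. orthogonal (x - orth_proj M x) z)"
proof -
  obtain y z where y: "y \<in> span M" and z: "\<And>w. w \<in> span M \<Longrightarrow> orthogonal z w" and xe: "x = y + z"
    using orthogonal_subspace_decomp_exists by blast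
  have sM: "span M = M" using assms by (simp add: span_eq_iff)
  have ex: "\<exists>!y. y \<in> M \<and> (\<forall>z\<in>M. orthogonal (x - y) z)"
  proof
    show "y \<in> M \<and> (\<forall>w\<in>M. orthogonal (x - y) w)" using y z xe sM by auto
  next
    fix y' assume a: "y' \<in> M \<and> (\<forall>w\<in>M. orthogonal (x - y') w)"
    have d: "y' - y \<in> M" using a y sM assms by (simp add: subspace_diff)
    have "orthogonal (x - y') (y' - y)" "orthogonal (x - y) (y' - y)" using a d y z xe sM by auto
    then have "(y' - y) \<bullet> (y' - y) = 0"
      by (simp add: orthogonal_def inner_diff_left inner_diff_right algebra_simps)
    then show "y' = y" by simp
  qed
  show ?thesis unfolding orth_proj_def using theI'[OF ex] by blast
qed

lemma orth_proj_inner: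
  fixes M :: "(real^'n) set"
  assumes "subspace M" "z \<in> M"
  shows "z \<bullet> orth_proj M x = z \<bullet> x"
proof -
  have "orthogonal (x - orth_proj M x) z" using orth_proj_props[OF assms(1)] assms(2) by blast
  then have "x \<bullet> z - orth_proj M x \<bullet> z = 0" by (simp add: orthogonal_def inner_diff_left)
  then show ?thesis by (simp add: inner_commute[of z])
qed

lemma PR_disj:
  fixes e :: "'n::finite \<Rightarrow> real^'n"
  assumes pr: "is_PR e M" and u: "u \<in> M" "u \<noteq> 0" and z: "z \<in> M" "z \<noteq> 0"
    and dj: "\<And>i. (u \<bullet> e i) * (z \<bullet> e i) = 0"
  shows False
proof -
  have sM: "subspace M" using pr by (simp add: is_PR_def)
  have a: "u + z \<in> M" "u - z \<in> M" using sM u z by (auto simp: subspace_add subspace_diff)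
  have "\<forall>i. \<bar>(u + z) \<bullet> orth_proj M (e i)\<bar> = \<bar>(u - z) \<bullet> orth_proj M (e i)\<bar>"
  proof
    fix i
    have "u \<bullet> e i = 0 \<or> z \<bullet> e i = 0" using dj[of i] by simp
    then show "\<bar>(u + z) \<bullet> orth_proj M (e i)\<bar> = \<bar>(u - z) \<bullet> orth_proj M (e i)\<bar>"
      using orth_proj_inner[OF sM a(1)] orth_proj_inner[OF sM a(2)]
      by (auto simp: inner_add_left inner_diff_left)
  qed
  then have "u + z = u - z \<or> u + z = - (u - z)" using pr a unfolding is_PR_def by blast
  moreover have "u + z \<noteq> u - z"
  proof
    assume "u + z = u - z"
    then have "(u + z) - (u - z) = 0" by simp
    moreover have "(u + z) - (u - z) = 2 *\<^sub>R z" by (simp add: scaleR_2 algebra_simps)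
    ultimately have "2 *\<^sub>R z = 0" by simp
    then show False using z by simp
  qed
  moreover have "u + z \<noteq> - (u - z)"
  proof
    assume "u + z = - (u - z)"
    then have "(u + z) + (u - z) = 0" by simp
    moreover have "(u + z) + (u - z) = 2 *\<^sub>R u" by (simp add: scaleR_2 algebra_simps)
    ultimately have "2 *\<^sub>R u = 0" by simp
    then show False using u by simp
  qed
  ultimately show False by blast
qed

lemma PR_intro:
  fixes e :: "'n::finite \<Rightarrow> real^'n"
  assumes eo: "\<And>i j. e i \<bullet> e j = (if i = j then 1 else 0)"
    and eb: "span (range e) = UNIV"
    and sM: "subspace M"
    and D: "\<And>x y. x \<in> M \<Longrightarrow> y \<in> M \<Longrightarrow> (\<And>i. (x \<bullet> e i) * (y \<bullet> e i) = 0) \<Longrightarrow> x = 0 \<or> y = 0"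
  shows "is_PR e M"
  unfolding is_PR_def
proof (intro conjI ballI impI)
  show "subspace M" by fact
  let ?P = "range (\<lambda>i. orth_proj M (e i))"
  have PM: "?P \<subseteq> M" using orth_proj_props[OF sM] by auto
  show "span ?P = M"
  proof
    show "span ?P \<subseteq> M" using PM sM by (simp add: span_minimal)
    show "M \<subseteq> span ?P"
    proof
      fix x assume x: "x \<in> M"
      obtain p q where p: "p \<in> span ?P" and q: "\<And>w. w \<in> span ?P \<Longrightarrow> orthogonal q w" and xe: "x = p + q"
        using orthogonal_subspace_decomp_exists by blast
      have "span ?P \<subseteq> M" using PM sM by (simp add: span_minimal)
      then have pM: "p \<in> M" using p by blast
      have "q = x - p" using xe by simp
      then have qM: "q \<in> M" using x pM sM by (simp add: subspace_diff)
      have "q \<bullet> e i = 0" for i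
      proof -
        have "orthogonal q (orth_proj M (e i))" using q by (simp add: span_base)
        then show ?thesis using orth_proj_inner[OF sM qM] by (simp add: orthogonal_def)
      qed
      then have "q = 0" using coord_zero[OF eo eb] by blast
      then show "x \<in> span ?P" using xe p by simp
    qed
  qed
next
  fix x y assume x: "x \<in> M" and y: "y \<in> M"
    and h: "\<forall>i. \<bar>x \<bullet> orth_proj M (e i)\<bar> = \<bar>y \<bullet> orth_proj M (e i)\<bar>"
  have ab: "\<bar>x \<bullet> e i\<bar> = \<bar>y \<bullet> e i\<bar>" for i
    using h[rule_format, of i] unfolding orth_proj_inner[OF sM x] orth_proj_inner[OF sM y] .
  have "((x + y) \<bullet> e i) * ((x - y) \<bullet> e i) = 0" for i
  proof -
    have "\<bar>x \<bullet> e i\<bar>^2 = \<bar>y \<bullet> e i\<bar>^2" using ab[of i] by simp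
    then have "(x \<bullet> e i)^2 = (y \<bullet> e i)^2" by simp
    then show ?thesis by (simp add: inner_add_left inner_diff_left algebra_simps power2_eq_square)
  qed
  then have "x + y = 0 \<or> x - y = 0"
    using D[of "x + y" "x - y"] sM x y by (simp add: subspace_add subspace_diff)
  then show "x = y \<or> x = - y" by (auto simp: add_eq_0_iff2)
qed


lemma max_lemma:
  fixes e :: "'n::finite \<Rightarrow> real^'n"
  assumes eo: "\<And>i j. e i \<bullet> e j = (if i = j then 1 else 0)"
    and eb: "span (range e) = UNIV"
    and sM: "subspace M" and u: "u \<in> M" "u \<noteq> 0" and dimM: "dim M = card (supp e u)"
    and pr: "is_PR e M'" and sub: "M \<subset> M'"
  shows False
proof -
  let ?S = "supp e u"
  define f where "f x = (\<Sum>i\<in>?S. (x \<bullet> e i) *\<^sub>R e i)" for x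
  have lin: "linear f" unfolding f_def
    by (rule linearI) (simp_all add: inner_add_left scaleR_add_left sum.distrib scaleR_sum_right)
  have sM': "subspace M'" using pr by (simp add: is_PR_def)
  have spM: "span M = M" "span M' = M'" using sM sM' by (simp_all add: span_eq_iff)
  have dl: "dim M < dim M'" using dim_psubset[of M M'] spM sub by simp
  have "\<not> inj_on f M'"
  proof
    assume inj: "inj_on f M'"
    have d1: "dim (f ` M') = dim M'" using dim_image_eq[OF lin, of M'] inj unfolding spM(2) .
    have "f ` M' \<subseteq> span (e ` ?S)"
      unfolding f_def
      apply clarsimp
      apply (rule span_sum)
      apply (rule span_scale)
      apply (rule span_base)
      by auto
    then have "dim (f ` M') \<le> card (e ` ?S)" by (rule dim_le_card) simp
    also have "\<dots> \<le> card ?S" by (rule card_image_le) simp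
    finally show False using d1 dl dimM by simp
  qed
  then obtain x y where xy: "x \<in> M'" "y \<in> M'" "x \<noteq> y" "f x = f y" by (auto simp: inj_on_def)
  define z where "z = x - y"
  have zM: "z \<in> M'" using xy sM' by (simp add: z_def subspace_diff)
  have z0: "z \<noteq> 0" using xy by (simp add: z_def)
  have fz: "f z = 0" using xy lin by (simp add: z_def linear_diff)
  have "(u \<bullet> e i) * (z \<bullet> e i) = 0" for i
  proof (cases "i \<in> ?S")
    case True
    have "f z \<bullet> e i = z \<bullet> e i" unfolding f_def using sum_coord[OF eo, of "\<lambda>i. z \<bullet> e i" ?S i] True by simp
    then show ?thesis using fz by simp
  next
    case False
    then show ?thesis by (simp add: supp_def)
  qed
  then show False using PR_disj[OF pr _ u(2) zM z0] u sub by auto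
qed


theorem theorem4p3:
  fixes e :: "'n::finite \<Rightarrow> real^'n" and u1 :: "real^'n" and k :: nat
  assumes e_orthonormal: "\<And>i j. e i \<bullet> e j = (if i = j then 1 else 0)"
    and e_basis: "span (range e) = UNIV"
    and k_le: "k \<le> (CARD('n) + 1) div 2"
    and u1_unit: "norm u1 = 1"
    and u1_supp: "card (supp e u1) = k"
  shows "\<exists>u :: nat \<Rightarrow> real^'n.
           u 1 = u1 \<and>
           (\<forall>i\<in>{1..k}. \<forall>j\<in>{1..k}. u i \<bullet> u j = (if i = j then 1 else 0)) \<and>
           dim (span (u ` {1..k})) = k \<and>
           is_max_PR e (span (u ` {1..k}))"
proof -
  note eo = e_orthonormal and eb = e_basis
  define S where "S = supp e u1"
  have u1nz: "u1 \<noteq> 0" using u1_unit by auto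
  have Sin: "\<And>i. i \<in> S \<Longrightarrow> u1 \<bullet> e i \<noteq> 0" and Sout: "\<And>i. i \<notin> S \<Longrightarrow> u1 \<bullet> e i = 0"
    by (auto simp: S_def supp_def)
  have cS: "card S = k" using u1_supp by (simp add: S_def)
  have Sne: "S \<noteq> {}"
  proof
    assume "S = {}"
    then have "u1 = 0" using coord_zero[OF eo eb, of u1] Sout by auto
    then show False using u1nz by simp
  qed
  have kpos: "1 \<le> k" using cS Sne by (metis One_nat_def Suc_leI card_gt_0_iff finite)
  have n2: "2 * k \<le> CARD('n) + 1" using k_le by linarith
  obtain idx :: "'n \<Rightarrow> nat" where idx: "inj idx"
    using finite_imp_inj_to_nat_seg[of "UNIV :: 'n set"] by auto
  define pt where "pt i = (if i \<in> S then real (idx i) + 1 else - (real (idx i) + 1))" for i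
  have ptpos: "\<And>i. i \<in> S \<Longrightarrow> pt i > 0" and ptneg: "\<And>i. i \<notin> S \<Longrightarrow> pt i < 0"
    by (auto simp: pt_def)
  have ptinj: "inj pt"
  proof (rule injI)
    fix i j assume h: "pt i = pt j"
    have "(i \<in> S) = (j \<in> S)" using h ptpos ptneg by (metis not_less_iff_gr_or_eq)
    then have "idx i = idx j" using h by (auto simp: pt_def split: if_splits)
    then show "i = j" using idx by (simp add: inj_eq)
  qed
  define bc where "bc j i = (if i \<in> S then (u1 \<bullet> e i) * pt i ^ j else real j * pt i ^ (j - 1))" for j i
  define w where "w j = (\<Sum>i\<in>UNIV. bc j i *\<^sub>R e i)" for j
  define comb where "comb c = (\<Sum>j<k. c j *\<^sub>R w j)" for c
  define cf where "cf c i = (if i \<in> S then (u1 \<bullet> e i) * Fv c k (pt i) else Fd c k (pt i))" for c i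
  have w_coord: "w j \<bullet> e i = bc j i" for j i
    unfolding w_def using sum_coord[OF eo, of "bc j" UNIV i] by simp
  have comb_coord: "comb c \<bullet> e i = cf c i" for c i
  proof -
    have "comb c \<bullet> e i = (\<Sum>j<k. c j * bc j i)"
      unfolding comb_def inner_sum_left by (simp add: w_coord)
    also have "\<dots> = cf c i"
      unfolding cf_def bc_def Fv_def Fd_def
      by (auto simp: sum_distrib_left mult_ac intro!: sum.cong)
    finally show ?thesis .
  qed
  define nc where "nc c \<longleftrightarrow> (\<exists>j\<in>{1..<k}. c j \<noteq> 0)" for c :: "nat \<Rightarrow> real"
  have nc_card: "card {i. comb c \<bullet> e i = 0} \<le> k - 1" if ncc: "nc c" for c
  proof -
    define A where "A = {i. i \<notin> S \<and> Fd c k (pt i) = 0}"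
    define B where "B = {i. i \<in> S \<and> Fv c k (pt i) = 0}"
    have ZAB: "{i. comb c \<bullet> e i = 0} = A \<union> B"
      unfolding A_def B_def comb_coord cf_def using Sin by auto
    obtain RDf: "finite {t. Fd c k t = 0}" and RDc: "card {t. Fd c k t = 0} \<le> k - 2"
      using Fd_roots[of k c] ncc unfolding nc_def by blast
    have k2: "2 \<le> k" using ncc unfolding nc_def by auto
    have cA: "card (pt ` A) = card A" "card (pt ` B) = card B"
      using ptinj by (auto intro!: card_image inj_on_subset[of pt UNIV])
    have pA: "pt ` A \<subseteq> {t. Fd c k t = 0} \<inter> {..<0}" using ptneg by (auto simp: A_def)
    have "card A + card B \<le> k - 1"
    proof (cases "B = {}")
      case True
      have "card (pt ` A) \<le> card {t. Fd c k t = 0}" using pA RDf by (meson card_mono le_infE)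
      then show ?thesis using True cA RDc by simp
    next
      case False
      have fB: "finite (pt ` B)" by simp
      have rB: "\<forall>b\<in>pt ` B. Fv c k b = 0" by (auto simp: B_def)
      obtain R where R: "finite R" "card (pt ` B) \<le> card R + 1" "R \<subseteq> {Min (pt ` B)<..<Max (pt ` B)}"
        "\<forall>r\<in>R. Fd c k r = 0"
        using rolle_count[OF Fv_deriv fB _ rB] False by blast
      have "Min (pt ` B) > 0" using False ptpos by (simp add: B_def)
      then have Rpos: "R \<subseteq> {0<..}" using R(3) by auto
      have e0: "{..<(0::real)} \<inter> {0<..} = {}" by auto
      have dj: "pt ` A \<inter> R = {}" using pA Rpos e0 by blast
      have "pt ` A \<union> R \<subseteq> {t. Fd c k t = 0}" using pA R(4) by auto
      then have "card (pt ` A \<union> R) \<le> k - 2" using RDf RDc by (meson card_mono le_trans)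
      then have "card (pt ` A) + card R \<le> k - 2" using dj R(1) by (simp add: card_Un_disjoint)
      then show ?thesis using cA R(2) k2 by linarith
    qed
    moreover have "card (A \<union> B) \<le> card A + card B" by (rule card_Un_le)
    ultimately show ?thesis using ZAB by simp
  qed
  have const_comb: "comb c = c 0 *\<^sub>R u1" if ncc: "\<not> nc c" for c
  proof -
    have cz: "\<And>j. j < k \<Longrightarrow> j \<noteq> 0 \<Longrightarrow> c j = 0" using ncc unfolding nc_def by auto
    have Fv0: "Fv c k t = c 0" for t
    proof -
      have "Fv c k t = (\<Sum>j<k. if j = 0 then c 0 else 0)"
        unfolding Fv_def by (rule sum.cong) (auto simp: cz)
      then show ?thesis using kpos by simp
    qed
    have Fd0: "Fd c k t = 0" for t
      unfolding Fd_def by (rule sum.neutral) (auto simp: cz)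
    have "(comb c - c 0 *\<^sub>R u1) \<bullet> e i = 0" for i
      by (auto simp: inner_diff_left comb_coord cf_def Fv0 Fd0 Sout)
    then show ?thesis using coord_zero[OF eo eb] by (metis eq_iff_diff_eq_0)
  qed
  have cardU: "k \<le> CARD('n)" using n2 kpos by linarith
  have zero_comb: "\<And>j. j < k \<Longrightarrow> c j = 0" if cz: "comb c = 0" for c
  proof (cases "nc c")
    case True
    have "{i. comb c \<bullet> e i = 0} = UNIV" using cz by simp
    then have "CARD('n) \<le> k - 1" using nc_card[OF True] by simp
    then show "\<And>j. j < k \<Longrightarrow> c j = 0" using cardU kpos by linarith
  next
    case False
    then have "c 0 = 0" using const_comb[OF False] cz u1nz by simp
    then show "\<And>j. j < k \<Longrightarrow> c j = 0" using False unfolding nc_def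
      by (metis atLeastLessThan_iff less_one not_le)
  qed
  have zset_const: "{i. comb c \<bullet> e i = 0} = - S" if "\<not> nc c" "comb c \<noteq> 0" for c
  proof -
    have "c 0 \<noteq> 0" using that const_comb by auto
    then show ?thesis using const_comb[OF that(1)] Sin Sout by auto
  qed
  have disj: "comb c = 0 \<or> comb d = 0"
    if h: "\<And>i. (comb c \<bullet> e i) * (comb d \<bullet> e i) = 0" for c d
  proof (rule ccontr)
    assume nz: "\<not> (comb c = 0 \<or> comb d = 0)"
    let ?Zc = "{i. comb c \<bullet> e i = 0}" and ?Zd = "{i. comb d \<bullet> e i = 0}"
    have un: "?Zc \<union> ?Zd = UNIV" using h by auto
    show False
    proof (cases "nc c")
      case True
      show False
      proof (cases "nc d")
        case True
        have "CARD('n) \<le> card ?Zc + card ?Zd" using un by (metis card_Un_le)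
        then show False using nc_card[OF \<open>nc c\<close>] nc_card[OF True] n2 kpos by linarith
      next
        case False
        have "S \<subseteq> ?Zc" using un zset_const[OF False] nz by auto
        then have "k \<le> card ?Zc" using cS by (metis card_mono finite)
        then show False using nc_card[OF True] kpos by linarith
      qed
    next
      case False
      have ZS: "?Zc = - S" using zset_const[OF False] nz by auto
      show False
      proof (cases "nc d")
        case True
        have "S \<subseteq> ?Zd" using un ZS by auto
        then have "k \<le> card ?Zd" using cS by (metis card_mono finite)
        then show False using nc_card[OF True] kpos by linarith
      next
        case False
        have "?Zd = - S" using zset_const[OF False] nz by auto
        then show False using un ZS Sne by auto
      qed
    qed
  qed
  have comb_add: "comb c + comb d = comb (\<lambda>j. c j + d j)" for c d
    by (simp add: comb_def sum.distrib scaleR_add_left)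
  have comb_scale: "r *\<^sub>R comb c = comb (\<lambda>j. r * c j)" for r c
    by (simp add: comb_def scaleR_sum_right)
  have comb_diff: "comb c - comb d = comb (\<lambda>j. c j - d j)" for c d
    by (simp add: comb_def sum_subtractf scaleR_diff_left)
  have w_comb: "w j = comb (\<lambda>l. if l = j then 1 else 0)" if "j < k" for j
  proof -
    have "comb (\<lambda>l. if l = j then 1 else 0) = (\<Sum>l<k. if l = j then w l else 0)"
      unfolding comb_def by (rule sum.cong) auto
    then show ?thesis using that by simp
  qed
  define M where "M = span (w ` {..<k})"
  have Mcomb: "\<exists>c. x = comb c" if "x \<in> M" for x
  proof -
    have sub: "subspace {x. \<exists>c. x = comb c}"
      unfolding subspace_def
    proof (intro conjI ballI allI)
      show "0 \<in> {x. \<exists>c. x = comb c}" by (auto intro!: exI[of _ "\<lambda>_. 0"] simp: comb_def)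
    next
      fix x y assume "x \<in> {x. \<exists>c. x = comb c}" "y \<in> {x. \<exists>c. x = comb c}"
      then show "x + y \<in> {x. \<exists>c. x = comb c}" using comb_add by auto
    next
      fix r x assume "x \<in> {x. \<exists>c. x = comb c}"
      then show "r *\<^sub>R x \<in> {x. \<exists>c. x = comb c}" using comb_scale by auto
    qed
    show ?thesis
      apply (rule span_induct[of x "w ` {..<k}" "\<lambda>x. \<exists>c. x = comb c"])
      using that sub w_comb unfolding M_def by auto
  qed
  have u1w: "u1 = w 0"
  proof -
    have "(u1 - w 0) \<bullet> e i = 0" for i
      by (auto simp: inner_diff_left w_coord bc_def Sout)
    then show ?thesis using coord_zero[OF eo eb] by (metis eq_iff_diff_eq_0)
  qed
  have u1M: "u1 \<in> w ` {..<k}" using u1w kpos by auto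
  have winj: "inj_on w {..<k}"
  proof (rule inj_onI)
    fix i j assume ij: "i \<in> {..<k}" "j \<in> {..<k}" "w i = w j"
    show "i = j"
    proof (rule ccontr)
      assume ne: "i \<noteq> j"
      let ?c = "\<lambda>l. (if l = i then 1 else 0) - (if l = j then (1::real) else 0)"
      have "comb ?c = comb (\<lambda>l. if l = i then 1 else 0) - comb (\<lambda>l. if l = j then 1 else 0)"
        by (rule comb_diff[symmetric])
      also have "\<dots> = w i - w j" using w_comb ij by simp
      finally have "comb ?c = 0" using ij by simp
      then have "?c i = 0" using zero_comb ij by blast
      then show False using ne by simp
    qed
  qed
  have indep: "independent (w ` {..<k})"
  proof (rule independent_if_scalars_zero)
    show "finite (w ` {..<k})" by simp
  next
    fix f x assume s: "(\<Sum>x\<in>w ` {..<k}. f x *\<^sub>R x) = 0" and x: "x \<in> w ` {..<k}"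
    have "(\<Sum>x\<in>w ` {..<k}. f x *\<^sub>R x) = comb (\<lambda>j. f (w j))"
      unfolding comb_def by (simp add: sum.reindex[OF winj])
    then have "\<And>j. j < k \<Longrightarrow> f (w j) = 0" using zero_comb[of "\<lambda>j. f (w j)"] s by simp
    then show "f x = 0" using x by auto
  qed
  have dimM: "dim M = k" unfolding M_def
    using dim_span_eq_card_independent[OF indep] card_image[OF winj] by simp
  have sM: "subspace M" unfolding M_def by simp
  have u1inM: "u1 \<in> M" unfolding M_def using u1M by (simp add: span_base)
  have prM: "is_PR e M"
  proof (rule PR_intro[OF eo eb sM])
    fix x y assume "x \<in> M" "y \<in> M" and h: "\<And>i. (x \<bullet> e i) * (y \<bullet> e i) = 0"
    then obtain c d where "x = comb c" "y = comb d" using Mcomb by blast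
    then show "x = 0 \<or> y = 0" using disj h by blast
  qed
  have maxM: "is_max_PR e M"
    unfolding is_max_PR_def using prM max_lemma[OF eo eb sM u1inM u1nz] dimM cS S_def by auto
  obtain U where U0: "U \<inter> insert 0 {u1} = {}" and Uo: "pairwise orthogonal ({u1} \<union> U)"
    and Us: "span ({u1} \<union> U) = span ({u1} \<union> w ` {..<k})"
    using orthogonal_extension_strong[of "{u1}" "w ` {..<k}"] by (auto simp: pairwise_def)
  have UsM: "span (insert u1 U) = M" using Us u1M unfolding M_def by (simp add: insert_absorb)
  have indU1: "independent (insert u1 U)"
    using pairwise_orthogonal_independent[of "insert u1 U"] Uo U0 u1nz by auto
  have "finite (insert u1 U)" using indU1 by (rule independent_imp_finite)
  then have finU: "finite U" by simp
  have u1U: "u1 \<notin> U" using U0 by auto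
  have "card (insert u1 U) = k" using dim_span_eq_card_independent[OF indU1] UsM dimM by simp
  then have cU: "card U = k - 1" using finU u1U by simp
  have indU: "independent U" using indU1 by (meson independent_mono subset_insertI)
  have dimN: "dim (span U) = k - 1" using dim_span_eq_card_independent[OF indU] cU by simp
  obtain B where B: "B \<subseteq> span U" "pairwise orthogonal B" "\<And>x. x \<in> B \<Longrightarrow> norm x = 1"
    "independent B" "card B = dim (span U)" "span B = span U"
    using orthonormal_basis_subspace[of "span U"] by auto
  have finB: "finite B" using B(4) by (rule independent_imp_finite)
  have cB: "card B = k - 1" using B(5) dimN by simp
  have u1U_orth: "orthogonal u1 v" if "v \<in> U" for v
    using Uo that u1U by (auto simp: pairwise_def)
  have u1B: "orthogonal u1 b" if "b \<in> B" for b
    using orthogonal_to_span[of b U u1] u1U_orth B(1) that by auto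
  have spanB: "span (insert u1 B) = M"
  proof
    have "insert u1 B \<subseteq> M" using u1inM B(1) UsM
      by (metis insert_subset span_mono subset_insertI subset_trans)
    then show "span (insert u1 B) \<subseteq> M" using sM by (simp add: span_minimal)
    have "insert u1 U \<subseteq> span (insert u1 B)"
      using B(6) by (metis insert_subset span_base insertI1 span_mono span_superset subset_insertI subset_trans)
    then show "M \<subseteq> span (insert u1 B)" using UsM by (metis span_minimal subspace_span)
  qed
  obtain g where g: "bij_betw g {0..<k - 1} B" using ex_bij_betw_nat_finite[OF finB] cB by auto
  define u where "u j = (if j = 1 then u1 else g (j - 2))" for j
  have uimg: "u ` {1..k} = insert u1 B"
  proof
    show "u ` {1..k} \<subseteq> insert u1 B"
    proof
      fix x assume "x \<in> u ` {1..k}"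
      then obtain j where j: "j \<in> {1..k}" "x = u j" by auto
      show "x \<in> insert u1 B"
      proof (cases "j = 1")
        case False
        then have "j - 2 \<in> {0..<k - 1}" using j by auto
        then show ?thesis using g j False by (auto simp: u_def bij_betw_def)
      qed (use j in \<open>simp add: u_def\<close>)
    qed
    show "insert u1 B \<subseteq> u ` {1..k}"
    proof
      fix x assume "x \<in> insert u1 B"
      then show "x \<in> u ` {1..k}"
      proof
        assume "x = u1" then show ?thesis using kpos by (auto simp: u_def intro!: image_eqI[of _ _ 1])
      next
        assume "x \<in> B"
        then obtain m where m: "m \<in> {0..<k - 1}" "x = g m" using g by (auto simp: bij_betw_def)
        have "u (m + 2) = x" using m by (simp add: u_def)
        moreover have "m + 2 \<in> {1..k}" using m by auto
        ultimately show ?thesis by force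
      qed
    qed
  qed
  have orthn: "u i \<bullet> u j = (if i = j then 1 else 0)" if ij: "i \<in> {1..k}" "j \<in> {1..k}" for i j
  proof -
    have inB: "u l \<in> B" if "l \<in> {1..k}" "l \<noteq> 1" for l
    proof -
      have "l - 2 \<in> {0..<k - 1}" using that by auto
      then show ?thesis using g that by (auto simp: u_def bij_betw_def)
    qed
    have n1: "norm (u l) = 1" if "l \<in> {1..k}" for l
      using inB[OF that] B(3) u1_unit by (cases "l = 1") (auto simp: u_def)
    show ?thesis
    proof (cases "i = j")
      case True
      then show ?thesis using n1[OF ij(1)] by (simp add: power2_norm_eq_inner[symmetric])
    next
      case False
      show ?thesis
      proof (cases "i = 1 \<or> j = 1")
        case True
        have o1: "u1 \<bullet> b = 0" "b \<bullet> u1 = 0" if "b \<in> B" for b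
        proof -
          have "u1 \<bullet> b = 0" using u1B[OF that] by (simp add: orthogonal_def)
          then show "u1 \<bullet> b = 0" "b \<bullet> u1 = 0" by (simp_all add: inner_commute[of b u1])
        qed
        show ?thesis
        proof (cases "i = 1")
          case True
          then have "j \<noteq> 1" using False by simp
          then show ?thesis using True o1(1)[OF inB[OF ij(2)]] by (simp add: u_def)
        next
          case Fi: False
          then have "j = 1" using \<open>i = 1 \<or> j = 1\<close> by simp
          then show ?thesis using Fi o1(2)[OF inB[OF ij(1)]] by (simp add: u_def)
        qed
      next
        case False2: False
        have "i - 2 \<noteq> j - 2" using False False2 ij by auto
        moreover have "i - 2 \<in> {0..<k - 1}" "j - 2 \<in> {0..<k - 1}" using ij False2 by auto
        ultimately have "g (i - 2) \<noteq> g (j - 2)" using g by (auto simp: bij_betw_def inj_on_def)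
        then show ?thesis using B(2) inB[OF ij(1)] inB[OF ij(2)] False False2
          by (auto simp: u_def pairwise_def orthogonal_def)
      qed
    qed
  qed
  show ?thesis
  proof (intro exI[of _ u] conjI ballI)
    show "u 1 = u1" by (simp add: u_def)
    show "\<And>i j. i \<in> {1..k} \<Longrightarrow> j \<in> {1..k} \<Longrightarrow> u i \<bullet> u j = (if i = j then 1 else 0)"
      using orthn by blast
    show "dim (span (u ` {1..k})) = k" using uimg spanB dimM by simp
    show "is_max_PR e (span (u ` {1..k}))" using uimg spanB maxM by simp
  qed
qed

end
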